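(* Let $d\ge3$ be an integer, $p_1,\dots,p_d\in(0,1)$, $q_j=1-p_j$, $P=\prod_{j=1}^dp_jq_j^{-1}$, and $\lambda\in(0,1)$. For every integer $n\ge L(P^{1/d},\lambda)$, $$\sum_{k=0}^n\binom nk^dP^k\ge\left(\frac{\sqrt{2\pi}}{e^2}\right)^dK(P^{1/d},d,\lambda)\,n^{-\frac{d-1}{2}}\left(1+P^{1/d}\right)^{dn}.$$
   Context: For $\alpha>0$, $\lambda\in(0,1)$, with $[x]$ the greatest integer $\le x$: $L(\alpha,\lambda)=\max\left\{\left[\left(\frac{(\alpha+1)+\sqrt{(\alpha+1)^2+4\lambda\alpha}}{2\lambda\alpha}\right)^2\right]+1,\ \left[\left(\frac{(\alpha+1)+\sqrt{(\alpha+1)^2+4\lambda\alpha}}{2\lambda}\right)^2\right]+1\right\}$; $C_1(\alpha,\lambda)=\max\left\{4,\frac{(\alpha+1)^2}{\alpha(1+\lambda\alpha)}\right\}\exp\!\left(-\frac12\frac{1+\lambda\alpha}{(1-\lambda)\alpha}\left((\alpha+1)^2+\frac{\lambda\alpha}{1+\lambda\alpha}\right)\right)$; $C_2(\alpha,\lambda)=\max\left\{4,\frac{(\alpha+1)^2}{\alpha+\lambda}\right\}\exp\!\left(-\frac12\frac{\alpha+\lambda}{(1-\lambda)\alpha^2}\left((\alpha+1)^2+\frac{\lambda\alpha^2}{\alpha+\lambda}\right)\right)$; $K(\alpha,d,\lambda)=\frac{(1-\lambda)\alpha+1}{\alpha+1}\left(C_1(\alpha,\lambda)\right)^d+\left(C_2(\alpha,\lambda)\right)^d$.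 *)

theory Defs
  imports "HOL-Analysis.Analysis"
begin

definition Lbound :: "real \<Rightarrow> real \<Rightarrow> int" where
  "Lbound \<alpha> lam = max
     (\<lfloor>(((\<alpha>+1) + sqrt ((\<alpha>+1)^2 + 4*lam*\<alpha>)) / (2*lam*\<alpha>))^2\<rfloor> + 1)
     (\<lfloor>(((\<alpha>+1) + sqrt ((\<alpha>+1)^2 + 4*lam*\<alpha>)) / (2*lam))^2\<rfloor> + 1)"

definition C1 :: "real \<Rightarrow> real \<Rightarrow> real" where
  "C1 \<alpha> lam = max 4 ((\<alpha>+1)^2 / (\<alpha>*(1+lam*\<alpha>))) *
     exp (-(1/2) * ((1+lam*\<alpha>) / ((1-lam)*\<alpha>)) *
          ((\<alpha>+1)^2 + lam*\<alpha> / (1+lam*\<alpha>)))"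

definition C2 :: "real \<Rightarrow> real \<Rightarrow> real" where
  "C2 \<alpha> lam = max 4 ((\<alpha>+1)^2 / (\<alpha>+lam)) *
     exp (-(1/2) * ((\<alpha>+lam) / ((1-lam)*\<alpha>^2)) *
          ((\<alpha>+1)^2 + lam*\<alpha>^2 / (\<alpha>+lam)))"

definition Kconst :: "real \<Rightarrow> nat \<Rightarrow> real \<Rightarrow> real" where
  "Kconst \<alpha> d lam = ((1-lam)*\<alpha>+1)/(\<alpha>+1) * (C1 \<alpha> lam)^d + (C2 \<alpha> lam)^d"

end

theory Submission
  imports Defs
begin

lemma mom0: "(\<Sum>k=0..n. real (n choose k) * x^k) = (1+x)^n"
  using binomial_ring[of x 1 n] by (simp add: atLeast0AtMost add.commute)

lemma mom1: "(\<Sum>k=0..n. real k * real (n choose k) * (x::real)^k) = real n * x * (1+x)^(n-1)"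
proof (cases n)
  case 0 then show ?thesis by simp
next
  case (Suc m)
  have "(\<Sum>k=0..n. real k * real (n choose k) * x^k)
      = (\<Sum>j=0..m. real (Suc j) * real (Suc m choose Suc j) * x^(Suc j))"
    unfolding Suc by (subst sum.atLeast0_atMost_Suc_shift) simp
  also have "\<dots> = (\<Sum>j=0..m. (real (Suc m) * x) * (real (m choose j) * x^j))"
  proof (rule sum.cong)
    fix j assume "j \<in> {0..m}"
    have "real (Suc j) * real (Suc m choose Suc j) = real (Suc m) * real (m choose j)"
      using Suc_times_binomial_eq[of m j] by (metis of_nat_mult mult.commute)
    then show "real (Suc j) * real (Suc m choose Suc j) * x^(Suc j) = (real (Suc m) * x) * (real (m choose j) * x^j)"
      by (simp add: algebra_simps)
  qed simp
  also have "\<dots> = real n * x * (1+x)^(n-1)"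
    by (simp add: sum_distrib_left[symmetric] mom0 Suc)
  finally show ?thesis .
qed

lemma mom2: "(\<Sum>k=0..n. real k * (real k - 1) * real (n choose k) * (x::real)^k) = real n * (real n - 1) * x^2 * (1+x)^(n-2)"
proof (cases n)
  case 0 then show ?thesis by simp
next
  case (Suc m)
  have "(\<Sum>k=0..n. real k * (real k - 1) * real (n choose k) * x^k)
      = (\<Sum>j=0..m. real (Suc j) * real j * real (Suc m choose Suc j) * x^(Suc j))"
    unfolding Suc by (subst sum.atLeast0_atMost_Suc_shift) simp
  also have "\<dots> = (\<Sum>j=0..m. (real (Suc m) * x) * (real j * real (m choose j) * x^j))"
  proof (rule sum.cong)
    fix j assume "j \<in> {0..m}"
    have eq: "real (Suc j) * real (Suc m choose Suc j) = real (Suc m) * real (m choose j)"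
      using Suc_times_binomial_eq[of m j] by (metis of_nat_mult mult.commute)
    have "real (Suc j) * real j * real (Suc m choose Suc j) * x^(Suc j) = (real (Suc j) * real (Suc m choose Suc j)) * (real j * x^(Suc j))" by (simp only: mult_ac)
    also have "\<dots> = (real (Suc m) * real (m choose j)) * (real j * x^(Suc j))" by (simp only: eq)
    also have "\<dots> = (real (Suc m) * x) * (real j * real (m choose j) * x^j)" by (simp only: power_Suc mult_ac)
    finally show "real (Suc j) * real j * real (Suc m choose Suc j) * x^(Suc j) = (real (Suc m) * x) * (real j * real (m choose j) * x^j)" .
  qed simp
  also have "\<dots> = real (Suc m) * x * (real m * x * (1+x)^(m-1))"
    by (simp add: sum_distrib_left[symmetric] mom1)
  also have "\<dots> = real n * (real n - 1) * x^2 * (1+x)^(n-2)"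
    by (simp add: Suc power2_eq_square algebra_simps)
  finally show ?thesis .
qed

lemma power_mean:
  fixes f :: "'a \<Rightarrow> real"
  assumes "finite I" "I \<noteq> {}" "\<And>i. i \<in> I \<Longrightarrow> f i \<ge> 0" "d \<ge> 1"
  shows "(\<Sum>i\<in>I. f i)^d \<le> (\<Sum>i\<in>I. f i ^ d) * real (card I)^(d-1)"
proof -
  have cv: "convex_on {0::real..} (\<lambda>x. x^d)"
  proof (cases "even d")
    case True then show ?thesis
      using convex_on_subset[OF convex_power_even[OF True]] by auto
  next
    case False then show ?thesis using convex_power_odd by auto
  qed
  define c where "c = real (card I)"
  have c: "c > 0" using assms unfolding c_def by (simp add: card_gt_0_iff)
  have "(\<Sum>i\<in>I. (1/c) *\<^sub>R f i)^d \<le> (\<Sum>i\<in>I. (1/c) * (f i)^d)"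
    using convex_on_sum[OF assms(1,2) cv, of "\<lambda>_. 1/c" f] assms(3) c unfolding c_def by simp
  hence "((\<Sum>i\<in>I. f i) / c)^d \<le> (\<Sum>i\<in>I. (f i)^d) / c"
    by (simp add: sum_divide_distrib[symmetric] sum_distrib_left[symmetric] divide_inverse mult.commute)
  hence "(\<Sum>i\<in>I. f i)^d / c^d \<le> (\<Sum>i\<in>I. (f i)^d) / c" by (simp add: power_divide)
  hence "(\<Sum>i\<in>I. f i)^d \<le> (\<Sum>i\<in>I. (f i)^d) / c * c^d" using c by (simp add: divide_le_eq)
  also have "c^d = c * c^(d-1)" using assms(4) by (metis One_nat_def Suc_pred not_one_le_zero power_Suc zero_less_iff_neq_zero) 
  finally show ?thesis using c unfolding c_def by simp
qed

lemma key_exp: assumes "4 \<le> (y::real)" shows "y * exp(-y/2) \<le> 4 * exp(-2)"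
proof -
  have "1 + (y-4)/2 - y/4 = (y-4)/4" by (simp add: field_simps)
  hence "y/4 \<le> 1 + (y-4)/2" using assms by linarith
  also have "\<dots> \<le> exp ((y-4)/2)" by (rule exp_ge_add_one_self)
  finally have "y \<le> 4 * exp ((y-4)/2)" by simp
  hence "y * exp(-y/2) \<le> 4 * exp ((y-4)/2) * exp(-y/2)" by (simp add: mult_right_mono)
  also have "\<dots> = 4 * exp(-2)" by (simp add: mult.assoc exp_add[symmetric] field_simps)
  finally show ?thesis .
qed

lemma Cb: fixes u v :: real assumes "0 \<le> v" "v \<le> u" "4 \<le> u"
  shows "max 4 v * exp (-(1/2) * u) \<le> 4 * exp(-2)" "0 \<le> max 4 v * exp (-(1/2) * u)"
proof -
  have "max 4 v \<le> u" using assms by simp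
  moreover have e: "exp (-(1/2)*u) = exp(-u/2)" by simp
  ultimately have "max 4 v * exp (-(1/2) * u) \<le> u * exp(-u/2)" unfolding e by (intro mult_right_mono) simp_all
  also have "\<dots> \<le> 4 * exp(-2)" using key_exp assms by simp
  finally show "max 4 v * exp (-(1/2) * u) \<le> 4 * exp(-2)" .
  show "0 \<le> max 4 v * exp (-(1/2) * u)" by simp
qed

lemma exp4: "16 * sqrt (2*pi) \<le> exp (4::real)"
proof -
  have "2*pi \<le> (283/100)^2" using pi_less_4 by (simp add: power2_eq_square)
  hence "sqrt (2*pi) \<le> sqrt ((283/100)^2)" by (rule real_sqrt_le_mono)
  hence s: "sqrt (2*pi) \<le> (283/100)" by simp
  have "(1 + 4 / real (50::nat))^50 \<le> exp (4::real)" by (rule exp_ge_one_plus_x_over_n_power_n) auto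
  moreover have "(1 + 4 / real (50::nat))^50 \<ge> (46::real)" by (simp add: power_divide le_divide_eq)
  ultimately show ?thesis using s by linarith
qed

lemma Cbounds:
  fixes a lam :: real
  assumes a: "a > 0" and l: "0 < lam" "lam < 1"
  shows "0 \<le> C1 a lam" "C1 a lam \<le> 4 * exp(-2)" "0 \<le> C2 a lam" "C2 a lam \<le> 4 * exp(-2)"
proof -
  define w where "w = (a+1)^2/a"
  have w4: "4 \<le> w"
  proof -
    have "4 * a \<le> (a+1)^2" using sum_squares_ge_zero[of "a-1" 0]
      by (simp add: power2_eq_square algebra_simps)
    thus ?thesis unfolding w_def using a by (simp add: le_divide_eq)
  qed
  have w0: "0 \<le> w" using w4 by simp
  define u1 where "u1 = (1+lam*a)/((1-lam)*a) * ((a+1)^2 + lam*a/(1+lam*a))"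
  define v1 where "v1 = (a+1)^2 / (a*(1+lam*a))"
  have C1e: "C1 a lam = max 4 v1 * exp (-(1/2)*u1)"
    unfolding C1_def u1_def v1_def by (simp add: mult.assoc)
  have la: "0 < lam*a" using a l by simp
  have p1: "0 < 1 + lam*a" using la by linarith
  have p2: "0 < (1-lam)*a" using a l by simp
  have "u1 \<ge> (1+lam*a)/((1-lam)*a) * (a+1)^2"
    unfolding u1_def using p1 p2 a l by (intro mult_left_mono) (simp_all add: less_imp_le)
  also have "(1+lam*a)/((1-lam)*a) * (a+1)^2 = w * ((1+lam*a)/(1-lam))"
    unfolding w_def using a l by (simp add: field_simps)
  also have "w * ((1+lam*a)/(1-lam)) \<ge> w * 1"
  proof (rule mult_left_mono)
    show "1 \<le> (1+lam*a)/(1-lam)" using la l by (simp add: le_divide_eq)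
  qed (rule w0)
  finally have u1w: "w \<le> u1" by simp
  have v1e: "v1 = w / (1+lam*a)" unfolding v1_def w_def by simp
  have wl: "0 \<le> w * (lam*a)" using w0 la by simp
  have v1w: "v1 \<le> w" unfolding v1e using p1 wl by (simp add: divide_le_eq algebra_simps)
  have v10: "0 \<le> v1" unfolding v1_def using a p1 by simp
  show "0 \<le> C1 a lam" "C1 a lam \<le> 4 * exp(-2)" unfolding C1e
    using Cb[OF v10, of u1] v1w u1w w4 by auto
  define u2 where "u2 = (a+lam)/((1-lam)*a^2) * ((a+1)^2 + lam*a^2/(a+lam))"
  define v2 where "v2 = (a+1)^2 / (a+lam)"
  have C2e: "C2 a lam = max 4 v2 * exp (-(1/2)*u2)"
    unfolding C2_def u2_def v2_def by (simp add: mult.assoc)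
  have q1: "0 < a + lam" using a l by simp
  have q2: "0 < (1-lam)*a^2" using a l by simp
  have "u2 \<ge> (a+lam)/((1-lam)*a^2) * (a+1)^2"
    unfolding u2_def using q1 q2 a l by (intro mult_left_mono) (simp_all add: less_imp_le)
  also have "(a+lam)/((1-lam)*a^2) * (a+1)^2 = w * ((a+lam)/((1-lam)*a))"
    unfolding w_def using a l by (simp add: field_simps power2_eq_square)
  also have "w * ((a+lam)/((1-lam)*a)) \<ge> w * 1"
    using w0 p2 l a by (intro mult_left_mono) (simp_all add: le_divide_eq algebra_simps)
  finally have u2w: "w \<le> u2" by simp
  have v2w: "v2 \<le> w" unfolding v2_def w_def using a q1 l
    by (intro divide_left_mono) simp_all
  have v20: "0 \<le> v2" unfolding v2_def using q1 by simp
  show "0 \<le> C2 a lam" "C2 a lam \<le> 4 * exp(-2)" unfolding C2e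
    using Cb[OF v20, of u2] v2w u2w w4 by auto
qed

lemma Kbound:
  fixes a lam :: real
  assumes a: "a > 0" and l: "0 < lam" "lam < 1"
  shows "Kconst a d lam \<le> 2 * (4 * exp(-2))^d"
proof -
  have c0: "0 \<le> ((1-lam)*a+1)/(a+1)" using a l by simp
  have c1: "((1-lam)*a+1)/(a+1) \<le> 1" using a l by (simp add: divide_le_eq algebra_simps)
  have "C1 a lam ^ d \<le> (4 * exp(-2))^d" using Cbounds[OF a l] by (intro power_mono) auto
  moreover have "C2 a lam ^ d \<le> (4 * exp(-2))^d" using Cbounds[OF a l] by (intro power_mono) auto
  moreover have "((1-lam)*a+1)/(a+1) * C1 a lam ^ d \<le> 1 * C1 a lam ^ d"
    using c1 Cbounds[OF a l] by (intro mult_right_mono) auto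
  ultimately show ?thesis unfolding Kconst_def by linarith
qed

lemma var_bound:
  fixes x :: real and n :: nat
  assumes x: "x > 0"
  defines "mu \<equiv> real n * x / (1+x)"
  shows "(\<Sum>k=0..n. real (n choose k) * x^k * (real k - mu)^2) \<le> real n * (1+x)^n / 4"
proof -
  define y where "y = x/(1+x)"
  define T where "T = (1+x)^n"
  have mu: "mu = real n * y" unfolding mu_def y_def by simp
  have S0: "(\<Sum>k=0..n. real (n choose k) * x^k) = T" unfolding T_def by (rule mom0)
  have S1: "(\<Sum>k=0..n. real k * real (n choose k) * x^k) = real n * y * T"
  proof (cases n)
    case 0 then show ?thesis by simp
  next
    case (Suc m)
    then have "(1+x)^n = (1+x) * (1+x)^(n-1)" by simp
    then show ?thesis unfolding mom1 y_def T_def using x by (simp add: field_simps)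
  qed
  have S2: "(\<Sum>k=0..n. real k * (real k - 1) * real (n choose k) * x^k) = real n * (real n - 1) * y^2 * T"
  proof (cases "n \<ge> 2")
    case True
    then have "(1+x)^n = (1+x)^2 * (1+x)^(n-2)" by (metis le_add_diff_inverse power_add)
    then have "y^2 * T = x^2 * (1+x)^(n-2)" unfolding y_def T_def using x by (simp add: power_divide)
    then show ?thesis unfolding mom2 by (simp add: mult.assoc)
  next
    case False
    then have "n = 0 \<or> n = 1" by auto
    then show ?thesis unfolding mom2 by auto
  qed
  have "(\<Sum>k=0..n. real (n choose k) * x^k * (real k - mu)^2)
     = (\<Sum>k=0..n. real k * (real k - 1) * real (n choose k) * x^k
         + (1 - 2*mu) * (real k * real (n choose k) * x^k) + mu^2 * (real (n choose k) * x^k))"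
    by (rule sum.cong) (simp_all add: power2_eq_square algebra_simps)
  also have "\<dots> = real n * (real n - 1) * y^2 * T + (1 - 2*mu) * (real n * y * T) + mu^2 * T"
    by (simp add: sum.distrib sum_distrib_left[symmetric] S0 S1 S2)
  also have "\<dots> = real n * T * (y * (1 - y))" unfolding mu by (simp add: power2_eq_square algebra_simps)
  also have "\<dots> \<le> real n * T * (1/4)"
  proof (rule mult_left_mono)
    show "y * (1-y) \<le> 1/4" using sum_squares_ge_zero[of "y - 1/2" 0] by (simp add: power2_eq_square algebra_simps)
    show "0 \<le> real n * T" unfolding T_def using x by simp
  qed
  finally show ?thesis unfolding T_def by simp
qed
theorem proposition15:
  fixes d :: nat and p :: "nat \<Rightarrow> real" and lam :: real and n :: nat
  assumes "d \<ge> 3"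
    and "\<And>j. j \<in> {1..d} \<Longrightarrow> 0 < p j \<and> p j < 1"
    and "0 < lam" and "lam < 1"
    and "int n \<ge> Lbound (root d (\<Prod>j=1..d. p j / (1 - p j))) lam"
  shows "(\<Sum>k=0..n. real (n choose k) ^ d * (\<Prod>j=1..d. p j / (1 - p j)) ^ k)
     \<ge> (sqrt (2*pi) / exp 2) ^ d
        * Kconst (root d (\<Prod>j=1..d. p j / (1 - p j))) d lam
        * real n powr (-(real d - 1)/2)
        * (1 + root d (\<Prod>j=1..d. p j / (1 - p j))) ^ (d*n)"
proof -
  define P where "P = (\<Prod>j=1..d. p j / (1 - p j))"
  define a where "a = root d P"
  have d0: "d > 0" using assms(1) by simp
  have P0: "P > 0" unfolding P_def using assms(2) by (intro prod_pos) auto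
  have a0: "a > 0" unfolding a_def using P0 d0 by simp
  have aP: "a ^ d = P" unfolding a_def using P0 d0 by simp
  have n1: "n \<ge> 1"
  proof -
    have "0 \<le> \<lfloor>(((a+1) + sqrt ((a+1)^2 + 4*lam*a)) / (2*lam))^2\<rfloor>" by simp
    hence "1 \<le> Lbound a lam" unfolding Lbound_def by linarith
    thus ?thesis using assms(5) unfolding a_def P_def by linarith
  qed
  define s where "s = sqrt (real n)"
  have s1: "s \<ge> 1" unfolding s_def using n1 by simp
  have ss: "s^2 = real n" unfolding s_def by simp
  define A where "A = (\<lambda>k. real (n choose k) * a^k)"
  have A0: "\<And>k. A k \<ge> 0" unfolding A_def using a0 by simp
  define T where "T = (1+a)^n"
  have T0: "T > 0" unfolding T_def using a0 by simp
  have LHS: "(\<Sum>k=0..n. real (n choose k) ^ d * P ^ k) = (\<Sum>k=0..n. A k ^ d)"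
    unfolding A_def by (rule sum.cong) (simp_all add: power_mult_distrib aP[symmetric] power_mult[symmetric] mult.commute)
  define mu where "mu = real n * a / (1+a)"
  define W where "W = {k\<in>{0..n}. (real k - mu)^2 < real n}"
  have fW: "finite W" unfolding W_def by simp
  have WS: "W \<subseteq> {0..n}" unfolding W_def by auto
  have var: "(\<Sum>k=0..n. A k * (real k - mu)^2) \<le> real n * T / 4"
    unfolding A_def T_def mu_def using var_bound[OF a0, of n] by simp
  have out: "(\<Sum>k\<in>{0..n}-W. A k) \<le> T/4"
  proof -
    have "(\<Sum>k\<in>{0..n}-W. A k) \<le> (\<Sum>k\<in>{0..n}-W. A k * (real k - mu)^2 / real n)"
    proof (rule sum_mono)
      fix k assume "k \<in> {0..n}-W"
      hence "real n \<le> (real k - mu)^2" unfolding W_def by auto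
      hence "A k * real n \<le> A k * (real k - mu)^2" using A0 by (intro mult_left_mono) auto
      thus "A k \<le> A k * (real k - mu)^2 / real n" using n1 by (simp add: le_divide_eq)
    qed
    also have "\<dots> \<le> (\<Sum>k\<in>{0..n}. A k * (real k - mu)^2 / real n)"
      by (rule sum_mono2) (use A0 in auto)
    also have "\<dots> = (\<Sum>k\<in>{0..n}. A k * (real k - mu)^2) / real n" by (simp add: sum_divide_distrib)
    also have "\<dots> \<le> (real n * T / 4) / real n" using var n1 by (intro divide_right_mono) auto
    also have "\<dots> = T/4" using n1 by simp
    finally show ?thesis .
  qed
  have tot: "(\<Sum>k\<in>{0..n}. A k) = T" unfolding A_def T_def by (rule mom0)
  have inW: "(\<Sum>k\<in>W. A k) \<ge> 3*T/4"
    using sum.subset_diff[OF WS, of A] tot out by simp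
  have Wne: "W \<noteq> {}" using inW T0 by auto
  define l where "l = nat (ceiling (mu - s))"
  define m where "m = nat (floor (2 * s))"
  have Wsub: "W \<subseteq> {l..l+m}"
  proof
    fix k assume "k \<in> W"
    hence "(real k - mu)^2 < s^2" unfolding W_def ss by simp
    hence "\<bar>real k - mu\<bar> < s" using s1 by (metis abs_le_square_iff abs_of_nonneg not_le order_trans zero_le_one)
    hence k1: "mu - s < real k" and k2: "real k < mu + s" by auto
    have "ceiling (mu - s) \<le> int k" using k1 by (simp add: ceiling_le_iff)
    hence "l \<le> k" unfolding l_def by (simp only: nat_le_iff)
    have "real_of_int (int k - ceiling (mu - s)) \<le> 2* s" using k2 le_of_int_ceiling[of "mu-s"] by (simp only: of_int_diff of_int_of_nat_eq)
    hence "int k - ceiling (mu - s) \<le> floor (2* s)" by (simp add: le_floor_iff)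
    hence "k \<le> l + m" unfolding l_def m_def using s1 by linarith
    thus "k \<in> {l..l+m}" using \<open>l \<le> k\<close> by simp
  qed
  have cW: "real (card W) \<le> 3* s"
  proof -
    have "card W \<le> card {l..l+m}" using Wsub by (intro card_mono) auto
    hence "card W \<le> m + 1" by simp
    moreover have "real m \<le> 2* s" unfolding m_def using s1 by linarith
    ultimately show ?thesis using s1 by linarith
  qed
  have "(3*T/4)^d \<le> (\<Sum>k\<in>W. A k)^d" using inW T0 by (intro power_mono) auto
  also have "\<dots> \<le> (\<Sum>k\<in>W. A k ^ d) * real (card W)^(d-1)"
    using power_mean[OF fW Wne, of A d] A0 d0 by simp
  also have "\<dots> \<le> (\<Sum>k\<in>W. A k ^ d) * (3* s)^(d-1)"
    using cW A0 by (intro mult_left_mono power_mono sum_nonneg) auto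
  finally have pm: "(3*T/4)^d \<le> (\<Sum>k\<in>W. A k ^ d) * (3* s)^(d-1)" .
  have sp: "(3* s)^(d-1) > 0" using s1 by simp
  have "(\<Sum>k\<in>W. A k ^ d) \<le> (\<Sum>k=0..n. A k ^ d)"
    using WS A0 by (intro sum_mono2) auto
  hence "(\<Sum>k\<in>W. A k ^ d) * (3* s)^(d-1) \<le> (\<Sum>k=0..n. A k ^ d) * (3* s)^(d-1)"
    using sp by (intro mult_right_mono) auto
  hence "(3*T/4)^d \<le> (\<Sum>k=0..n. A k ^ d) * (3* s)^(d-1)" using pm by linarith
  hence low: "(3*T/4)^d / (3* s)^(d-1) \<le> (\<Sum>k=0..n. A k ^ d)"
    using sp by (simp add: pos_divide_le_eq)
  have e3: "(3*T/4)^d / (3* s)^(d-1) = 3 * (1/4)^d * (T^d / s^(d-1))"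
  proof -
    have "(3::real)^d = 3 * 3^(d-1)" using d0 by (metis power_eq_if neq0_conv)
    thus ?thesis using s1 by (simp add: power_mult_distrib power_divide field_simps)
  qed
  have pw: "real n powr (-(real d - 1)/2) = 1 / s^(d-1)"
  proof -
    have eq1: "s^(d-1) = real n powr (real (d-1) * (1/2))"
      unfolding s_def using n1 by (simp add: powr_half_sqrt[symmetric] powr_power)
    have r: "real (d-1) = real d - 1" using d0 by (simp add: of_nat_diff)
    have eq2: "-(real d - 1)/2 = - (real (d-1) * (1/2))" unfolding r by (simp add: field_simps)
    have "real n powr (-(real d - 1)/2) = inverse (real n powr (real (d-1) * (1/2)))"
      unfolding eq2 by (rule powr_minus)
    also have "\<dots> = 1 / s^(d-1)" unfolding eq1[symmetric] by (rule inverse_eq_divide)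
    finally show ?thesis .
  qed
  have Tpow: "(1+a)^(d*n) = T^d" unfolding T_def by (metis power_mult mult.commute)
  have cst: "(sqrt (2*pi) / exp 2) ^ d * Kconst a d lam \<le> 3 * (1/4)^d"
  proof -
    have b: "sqrt (2*pi) / exp 2 * (4 * exp(-2)) \<le> 1/4"
    proof -
      have "sqrt (2*pi) / exp 2 * (4 * exp(-2)) = 4 * sqrt (2*pi) / exp 4"
      proof -
        have e4: "exp 4 = exp 2 * exp (2::real)" by (simp flip: exp_add)
        show ?thesis unfolding e4 exp_minus by (simp add: field_simps)
      qed
      also have "\<dots> \<le> 1/4" using exp4 by (simp add: divide_le_eq)
      finally show ?thesis .
    qed
    have "(sqrt (2*pi) / exp 2) ^ d * Kconst a d lam \<le> (sqrt (2*pi) / exp 2) ^ d * (2 * (4 * exp(-2))^d)"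
      using Kbound[OF a0 assms(3,4), of d] by (intro mult_left_mono) auto
    also have "\<dots> = 2 * (sqrt (2*pi) / exp 2 * (4 * exp(-2)))^d"
      by (subst power_mult_distrib) (simp only: mult_ac)
    also have "\<dots> \<le> 2 * (1/4)^d" using b by (intro mult_left_mono power_mono) auto
    also have "\<dots> \<le> 3 * (1/4)^d" by simp
    finally show ?thesis .
  qed
  have "(sqrt (2*pi) / exp 2) ^ d * Kconst a d lam * real n powr (-(real d - 1)/2) * (1+a)^(d*n)
      = ((sqrt (2*pi) / exp 2) ^ d * Kconst a d lam) * (T^d / s^(d-1))"
    unfolding pw Tpow by simp
  also have "\<dots> \<le> 3 * (1/4)^d * (T^d / s^(d-1))"
    using cst T0 s1 by (intro mult_right_mono) auto
  also have "\<dots> \<le> (\<Sum>k=0..n. A k ^ d)" using low e3 by simp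
  finally show ?thesis unfolding LHS[symmetric] P_def[symmetric] a_def[symmetric] .
qed

end
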